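(* Let $G$ be a connected graph that is not a clique and that has a min-max clique covering satisfying simple intersection, and let $\mathcal{C}(G)$ be its compressed cliques graph. Then \[ |V(G)|-Z_+(G)=|V(\mathcal{C}(G))|-Z_+(\mathcal{C}(G)). \] Moreover, there exist collections of forcing trees for $G$ and for $\mathcal{C}(G)$ that differ only in that the collection for $G$ may contain additional forcing trees that are isolated vertices.
   Context: A clique covering of a graph is a set of cliques such that every edge lies in at least one of them; $\operatorname{cc}(G)$ is its minimum size. A min-max clique covering is a clique covering of size $\operatorname{cc}(G)$ consisting of maximal cliques; it has simple intersection if no three distinct cliques of it share a vertex. Given such a covering $\{C_1,\dots,C_\ell\}$, put $C_{i,j}=C_i\cap C_j$ ($i\ne j$) and $C_{i,i}=C_i\setminus\bigcup_{j\ne i}C_j$; the compressed cliques graph $\mathcal{C}(G)$ has a vertex $v_{i,j}$ for each non-empty $C_{i,j}$ (including $i=j$), with $v_{i,j}\sim v_{i',j'}$ iff $\{i,j\}\cap\{i',j'\}\ne\emptyset$. Positive zero forcing: initially the vertices of a set $B$ are black and all others white. Repeatedly, let $W_1,\dots,W_k$ be the vertex sets of the components of $G$ minus the black vertices; if a black vertex $u$ has exactly one white neighbour $w$ in the subgraph induced by $W_i\cup(\text{black vertices})$, then $u$ may force $w$ (colour it black). $B$ is a positive zero forcing set if eventually all vertices become black; $Z_+(G)$ is the minimum size of such a set. Recording which vertex forces which, the forcing process partitions $V(G)$ into vertex-disjoint induced rooted trees called forcing trees (roots being initially black vertices). *)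

theory Defs
  imports Main
begin

definition sgraph :: "'a set \<Rightarrow> 'a set set \<Rightarrow> bool" where
  "sgraph V E \<longleftrightarrow> finite V \<and> (\<forall>e\<in>E. \<exists>u v. u \<noteq> v \<and> u \<in> V \<and> v \<in> V \<and> e = {u, v})"

definition adj :: "'a set set \<Rightarrow> 'a \<Rightarrow> 'a \<Rightarrow> bool" where
  "adj E u v \<longleftrightarrow> u \<noteq> v \<and> {u, v} \<in> E"

definition connected_graph :: "'a set \<Rightarrow> 'a set set \<Rightarrow> bool" where
  "connected_graph V E \<longleftrightarrow> V \<noteq> {} \<and> (\<forall>u\<in>V. \<forall>v\<in>V. (adj E)\<^sup>*\<^sup>* u v)"

definition is_clique :: "'a set \<Rightarrow> 'a set set \<Rightarrow> 'a set \<Rightarrow> bool" where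
  "is_clique V E C \<longleftrightarrow> C \<subseteq> V \<and> (\<forall>u\<in>C. \<forall>v\<in>C. u \<noteq> v \<longrightarrow> {u, v} \<in> E)"

definition maximal_clique :: "'a set \<Rightarrow> 'a set set \<Rightarrow> 'a set \<Rightarrow> bool" where
  "maximal_clique V E C \<longleftrightarrow> is_clique V E C \<and> (\<forall>D. is_clique V E D \<and> C \<subseteq> D \<longrightarrow> D = C)"

definition clique_cover :: "'a set \<Rightarrow> 'a set set \<Rightarrow> 'a set set \<Rightarrow> bool" where
  "clique_cover V E \<C> \<longleftrightarrow> finite \<C> \<and> (\<forall>C\<in>\<C>. is_clique V E C) \<and> (\<forall>e\<in>E. \<exists>C\<in>\<C>. e \<subseteq> C)"

definition cc :: "'a set \<Rightarrow> 'a set set \<Rightarrow> nat" where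
  "cc V E = Min {card \<C> | \<C>. clique_cover V E \<C>}"

definition minmax_clique_cover :: "'a set \<Rightarrow> 'a set set \<Rightarrow> 'a set set \<Rightarrow> bool" where
  "minmax_clique_cover V E \<C> \<longleftrightarrow> clique_cover V E \<C> \<and> card \<C> = cc V E \<and> (\<forall>C\<in>\<C>. maximal_clique V E C)"

definition simple_intersection :: "'a set set \<Rightarrow> bool" where
  "simple_intersection \<C> \<longleftrightarrow>
     (\<forall>C1\<in>\<C>. \<forall>C2\<in>\<C>. \<forall>C3\<in>\<C>. C1 \<noteq> C2 \<and> C1 \<noteq> C3 \<and> C2 \<noteq> C3 \<longrightarrow> C1 \<inter> C2 \<inter> C3 = {})"

text \<open>The index {i,j} (unordered, possibly i = j) is represented by the set of cliques
  {C_i, C_j} (a one- or two-element subset of the covering). The part C_{i,j}:\<close>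
definition cpart :: "'a set set \<Rightarrow> 'a set set \<Rightarrow> 'a set" where
  "cpart \<C> I = (if card I = 1 then the_elem I - \<Union>(\<C> - I) else \<Inter> I)"

definition ccg_V :: "'a set set \<Rightarrow> 'a set set set" where
  "ccg_V \<C> = {I. I \<subseteq> \<C> \<and> (card I = 1 \<or> card I = 2) \<and> cpart \<C> I \<noteq> {}}"

definition ccg_E :: "'a set set \<Rightarrow> 'a set set set set" where
  "ccg_E \<C> = {{I, J} | I J. I \<in> ccg_V \<C> \<and> J \<in> ccg_V \<C> \<and> I \<noteq> J \<and> I \<inter> J \<noteq> {}}"

definition white_comp :: "'a set \<Rightarrow> 'a set set \<Rightarrow> 'a set \<Rightarrow> 'a \<Rightarrow> 'a set" where
  "white_comp V E B w =
     {x \<in> V - B. (\<lambda>a b. adj E a b \<and> a \<in> V - B \<and> b \<in> V - B)\<^sup>*\<^sup>* w x}"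

definition can_force :: "'a set \<Rightarrow> 'a set set \<Rightarrow> 'a set \<Rightarrow> 'a \<Rightarrow> 'a \<Rightarrow> bool" where
  "can_force V E B u w \<longleftrightarrow> u \<in> B \<and> B \<subseteq> V \<and> w \<in> V - B \<and>
     {x \<in> white_comp V E B w. adj E u x} = {w}"

fun force_seq :: "'a set \<Rightarrow> 'a set set \<Rightarrow> 'a set \<Rightarrow> ('a \<times> 'a) list \<Rightarrow> bool" where
  "force_seq V E B [] = True"
| "force_seq V E B ((u, w) # fs) = (can_force V E B u w \<and> force_seq V E (insert w B) fs)"

text \<open>B together with the forces fs is a complete positive zero forcing process.
  Its forcing trees are given by the roots B and the forcing edges set fs.\<close>
definition pzf_process :: "'a set \<Rightarrow> 'a set set \<Rightarrow> 'a set \<Rightarrow> ('a \<times> 'a) list \<Rightarrow> bool" where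
  "pzf_process V E B fs \<longleftrightarrow> B \<subseteq> V \<and> force_seq V E B fs \<and> B \<union> snd ` set fs = V"

definition pzf_set :: "'a set \<Rightarrow> 'a set set \<Rightarrow> 'a set \<Rightarrow> bool" where
  "pzf_set V E B \<longleftrightarrow> (\<exists>fs. pzf_process V E B fs)"

definition Zplus :: "'a set \<Rightarrow> 'a set set \<Rightarrow> nat" where
  "Zplus V E = Min {card B | B. pzf_set V E B}"

end

theory Submission
  imports Defs
begin

lemma adj_sym: "adj E u v = adj E v u"
  unfolding adj_def by (auto simp: insert_commute)

lemma adj_irrefl: "\<not> adj E u u"
  unfolding adj_def by auto

lemma force_seq_card:
  "force_seq V E B fs \<Longrightarrow> finite B \<Longrightarrow> card (B \<union> snd ` set fs) = card B + length fs"
proof (induction fs arbitrary: B)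
  case Nil
  then show ?case by simp
next
  case (Cons p fs)
  obtain u w where p: "p = (u, w)" by (cases p)
  from Cons.prems p have cf: "can_force V E B u w" and fs: "force_seq V E (insert w B) fs" by auto
  from cf have wB: "w \<notin> B" unfolding can_force_def by auto
  have "card (insert w B \<union> snd ` set fs) = card (insert w B) + length fs"
    using Cons.IH[OF fs] Cons.prems(2) by simp
  moreover have "B \<union> snd ` set (p # fs) = insert w B \<union> snd ` set fs" using p by auto
  ultimately show ?case using wB Cons.prems(2) by simp
qed

lemma Zplus_props:
  assumes "finite V"
  shows "(\<exists>B. pzf_set V E B \<and> card B = Zplus V E) \<and> (\<forall>B. pzf_set V E B \<longrightarrow> Zplus V E \<le> card B)"
proof -
  let ?S = "{card B | B. pzf_set V E B}"
  have sub: "?S \<subseteq> {..card V}"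
  proof
    fix n assume "n \<in> ?S"
    then obtain B where "n = card B" "pzf_set V E B" by auto
    then have "B \<subseteq> V" unfolding pzf_set_def pzf_process_def by auto
    then show "n \<in> {..card V}" using \<open>n = card B\<close> card_mono[OF assms] by auto
  qed
  then have fin: "finite ?S" using finite_subset by blast
  have "pzf_set V E V" unfolding pzf_set_def pzf_process_def
    by (rule exI[of _ "[]"]) simp
  then have ne: "?S \<noteq> {}" by auto
  have m: "Min ?S \<in> ?S" using Min_in[OF fin ne] .
  then obtain B0 where "pzf_set V E B0" "card B0 = Zplus V E" unfolding Zplus_def by auto
  moreover have "\<forall>B. pzf_set V E B \<longrightarrow> Zplus V E \<le> card B"
  proof (intro allI impI)
    fix B assume "pzf_set V E B"
    then have "card B \<in> ?S" by auto
    then show "Zplus V E \<le> card B" unfolding Zplus_def using Min_le[OF fin] by simp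
  qed
  ultimately show ?thesis by auto
qed

locale tq =
  fixes V :: "'a set" and E :: "'a set set" and W :: "'b set" and EH :: "'b set set"
    and f :: "'a \<Rightarrow> 'b"
  assumes finV: "finite V" and finW: "finite W"
    and adjV: "adj E u v \<Longrightarrow> u \<in> V \<and> v \<in> V"
    and adjW: "adj EH I J \<Longrightarrow> I \<in> W \<and> J \<in> W"
    and fV: "v \<in> V \<Longrightarrow> f v \<in> W"
    and key: "u \<in> V \<Longrightarrow> v \<in> V \<Longrightarrow> u \<noteq> v \<Longrightarrow> adj E u v \<longleftrightarrow> (f u = f v \<or> adj EH (f u) (f v))"
begin

context
  fixes \<phi> :: "'b \<Rightarrow> 'a"
  assumes phiV: "\<And>I. I \<in> W \<Longrightarrow> \<phi> I \<in> V" and fphi: "\<And>I. I \<in> W \<Longrightarrow> f (\<phi> I) = I"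
begin

definition Bg :: "'b set \<Rightarrow> 'a set" where
  "Bg B' = \<phi> ` B' \<union> (V - \<phi> ` W)"

lemma white_G: "B' \<subseteq> W \<Longrightarrow> V - Bg B' = \<phi> ` (W - B')"
proof
  assume B': "B' \<subseteq> W"
  show "V - Bg B' \<subseteq> \<phi> ` (W - B')"
  proof
    fix x assume x: "x \<in> V - Bg B'"
    then obtain X where X: "X \<in> W" "x = \<phi> X" unfolding Bg_def by auto
    have "X \<notin> B'" using x X unfolding Bg_def by auto
    then show "x \<in> \<phi> ` (W - B')" using X by auto
  qed
  show "\<phi> ` (W - B') \<subseteq> V - Bg B'"
  proof
    fix x assume "x \<in> \<phi> ` (W - B')"
    then obtain X where X: "X \<in> W" "X \<notin> B'" "x = \<phi> X" by auto
    have "x \<notin> \<phi> ` B'"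
    proof
      assume "x \<in> \<phi> ` B'"
      then obtain Y where "Y \<in> B'" "x = \<phi> Y" by auto
      then have "f x = Y" using fphi B' by auto
      moreover have "f x = X" using X fphi by auto
      ultimately show False using X \<open>Y \<in> B'\<close> by auto
    qed
    then show "x \<in> V - Bg B'" using X phiV unfolding Bg_def by auto
  qed
qed

lemma comp_lift_A:
  assumes B': "B' \<subseteq> W" and J: "J \<in> W - B'" and x: "x \<in> white_comp V E (Bg B') (\<phi> J)"
  shows "\<exists>X. x = \<phi> X \<and> X \<in> white_comp W EH B' J"
proof -
  let ?R = "\<lambda>a b. adj E a b \<and> a \<in> V - Bg B' \<and> b \<in> V - Bg B'"
  from x have "?R\<^sup>*\<^sup>* (\<phi> J) x" unfolding white_comp_def by auto
  then show ?thesis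
  proof (induction rule: rtranclp_induct)
    case base
    then show ?case using J unfolding white_comp_def by auto
  next
    case (step y z)
    from step.IH obtain Y where Y: "y = \<phi> Y" "Y \<in> white_comp W EH B' J" by auto
    from step.hyps(2) have z: "z \<in> \<phi> ` (W - B')" using white_G[OF B'] by auto
    then obtain Z where Z: "Z \<in> W" "Z \<notin> B'" "z = \<phi> Z" by auto
    have YW: "Y \<in> W" "Y \<notin> B'" using Y(2) unfolding white_comp_def by auto
    have ayz: "adj E y z" using step.hyps(2) by auto
    then have "y \<noteq> z" using adj_irrefl by metis
    then have "Y \<noteq> Z" using Y Z by auto
    from key[of y z] ayz \<open>y \<noteq> z\<close> phiV YW Z Y fphi have "adj EH Y Z" by auto
    then have "(\<lambda>a b. adj EH a b \<and> a \<in> W - B' \<and> b \<in> W - B')\<^sup>*\<^sup>* J Z"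
      using Y(2) YW Z unfolding white_comp_def
      by (auto intro: rtranclp.rtrancl_into_rtrancl)
    then show ?case using Z unfolding white_comp_def by auto
  qed
qed

lemma force_A:
  assumes B': "B' \<subseteq> W" and cf: "can_force W EH B' I J"
  shows "can_force V E (Bg B') (\<phi> I) (\<phi> J)"
proof -
  from cf have I: "I \<in> B'" and J: "J \<in> W - B'" and S: "{X \<in> white_comp W EH B' J. adj EH I X} = {J}"
    unfolding can_force_def by auto
  have IW: "I \<in> W" using I B' by auto
  have "\<phi> I \<in> Bg B'" using I unfolding Bg_def by auto
  moreover have "Bg B' \<subseteq> V" unfolding Bg_def using phiV B' by auto
  moreover have phJ: "\<phi> J \<in> V - Bg B'" using white_G[OF B'] J by auto
  moreover have "{x \<in> white_comp V E (Bg B') (\<phi> J). adj E (\<phi> I) x} = {\<phi> J}"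
  proof
    show "{x \<in> white_comp V E (Bg B') (\<phi> J). adj E (\<phi> I) x} \<subseteq> {\<phi> J}"
    proof
      fix x assume x: "x \<in> {x \<in> white_comp V E (Bg B') (\<phi> J). adj E (\<phi> I) x}"
      then obtain X where X: "x = \<phi> X" "X \<in> white_comp W EH B' J"
        using comp_lift_A[OF B' J] by blast
      have XW: "X \<in> W" using X unfolding white_comp_def by auto
      have a: "adj E (\<phi> I) (\<phi> X)" using x X by auto
      then have "\<phi> I \<noteq> \<phi> X" using adj_irrefl by metis
      then have ne: "I \<noteq> X" by auto
      have "\<phi> I \<noteq> \<phi> X" using a adj_irrefl by metis
      with key[of "\<phi> I" "\<phi> X"] a phiV IW XW fphi have "adj EH I X" by auto
      then have "X = J" using S X by auto
      then show "x \<in> {\<phi> J}" using X by auto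
    qed
    have "J \<in> {X \<in> white_comp W EH B' J. adj EH I X}" using S by auto
    then have aIJ: "adj EH I J" by auto
    have JW: "J \<in> W" using J by auto
    have "I \<noteq> J" using I J by auto
    then have ne: "\<phi> I \<noteq> \<phi> J" using fphi[OF IW] fphi[OF JW] by metis
    have "adj E (\<phi> I) (\<phi> J) \<longleftrightarrow> (f (\<phi> I) = f (\<phi> J) \<or> adj EH (f (\<phi> I)) (f (\<phi> J)))"
      by (rule key[OF phiV[OF IW] phiV[OF JW] ne])
    then have "adj E (\<phi> I) (\<phi> J)" using aIJ fphi[OF IW] fphi[OF JW] by simp
    moreover have "\<phi> J \<in> white_comp V E (Bg B') (\<phi> J)" using phJ unfolding white_comp_def by auto
    ultimately show "{\<phi> J} \<subseteq> {x \<in> white_comp V E (Bg B') (\<phi> J). adj E (\<phi> I) x}" by auto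
  qed
  ultimately show ?thesis unfolding can_force_def by blast
qed

lemma seq_A:
  "B' \<subseteq> W \<Longrightarrow> force_seq W EH B' fs \<Longrightarrow> force_seq V E (Bg B') (map (\<lambda>(u, w). (\<phi> u, \<phi> w)) fs)"
proof (induction fs arbitrary: B')
  case Nil
  then show ?case by simp
next
  case (Cons p fs)
  obtain I J where p: "p = (I, J)" by (cases p)
  from Cons.prems p have cf: "can_force W EH B' I J" and fs: "force_seq W EH (insert J B') fs" by auto
  have JW: "J \<in> W" using cf unfolding can_force_def by auto
  have "Bg (insert J B') = insert (\<phi> J) (Bg B')" unfolding Bg_def by auto
  moreover have sub: "insert J B' \<subseteq> W" using JW Cons.prems(1) by blast
  moreover have "force_seq V E (Bg (insert J B')) (map (\<lambda>(u, w). (\<phi> u, \<phi> w)) fs)"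
    by (rule Cons.IH[OF sub fs])
  moreover have "can_force V E (Bg B') (\<phi> I) (\<phi> J)" by (rule force_A[OF Cons.prems(1) cf])
  ultimately show ?case using p by simp
qed

lemma main_A:
  assumes "pzf_process W EH B' fs"
  shows "pzf_process V E (Bg B') (map (\<lambda>(u, w). (\<phi> u, \<phi> w)) fs) \<and> card (Bg B') + card W = card V + card B'"
proof -
  from assms have B': "B' \<subseteq> W" and fs: "force_seq W EH B' fs" and cov: "B' \<union> snd ` set fs = W"
    unfolding pzf_process_def by auto
  have sA: "force_seq V E (Bg B') (map (\<lambda>(u, w). (\<phi> u, \<phi> w)) fs)" using seq_A[OF B' fs] .
  have im: "snd ` set (map (\<lambda>(u, w). (\<phi> u, \<phi> w)) fs) = \<phi> ` (snd ` set fs)"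
    unfolding set_map image_image by (simp add: case_prod_beta)
  have "Bg B' \<union> \<phi> ` (snd ` set fs) = \<phi> ` (B' \<union> snd ` set fs) \<union> (V - \<phi> ` W)"
    unfolding Bg_def image_Un by blast
  also have "\<dots> = \<phi> ` W \<union> (V - \<phi> ` W)" using cov by simp
  also have "\<dots> = V" using phiV by blast
  finally have cov2: "Bg B' \<union> snd ` set (map (\<lambda>(u, w). (\<phi> u, \<phi> w)) fs) = V"
    using im by simp
  have BgV: "Bg B' \<subseteq> V" unfolding Bg_def using phiV B' by auto
  have finB: "finite B'" using B' finW finite_subset by auto
  have finBg: "finite (Bg B')" using BgV finV finite_subset by auto
  have c1: "card W = card B' + length fs" using force_seq_card[OF fs finB] cov by simp
  have c2: "card V = card (Bg B') + length fs" using force_seq_card[OF sA finBg] cov2 by simp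
  show ?thesis using sA cov2 BgV c1 c2 unfolding pzf_process_def by auto
qed

end


definition Bh :: "'a set \<Rightarrow> 'b set" where
  "Bh B = {I \<in> W. \<forall>v\<in>V. f v = I \<longrightarrow> v \<in> B}"

lemma white_H: "X \<in> W - Bh B \<Longrightarrow> \<exists>x\<in>V. f x = X \<and> x \<notin> B"
  unfolding Bh_def by auto

lemma comp_lift_B:
  assumes B: "B \<subseteq> V" and w: "w \<in> V - B" and X: "X \<in> white_comp W EH (Bh B) (f w)"
  shows "\<exists>x \<in> white_comp V E B w. f x = X"
proof -
  let ?R = "\<lambda>a b. adj EH a b \<and> a \<in> W - Bh B \<and> b \<in> W - Bh B"
  from X have "?R\<^sup>*\<^sup>* (f w) X" unfolding white_comp_def by auto
  then show ?thesis
  proof (induction rule: rtranclp_induct)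
    case base
    have "w \<in> white_comp V E B w" using w unfolding white_comp_def by auto
    then show ?case by blast
  next
    case (step Y Z)
    from step.IH obtain y where y: "y \<in> white_comp V E B w" "f y = Y" by blast
    from step.hyps(2) have aYZ: "adj EH Y Z" and Zw: "Z \<in> W - Bh B" by auto
    from white_H[OF Zw] obtain z where z: "z \<in> V" "f z = Z" "z \<notin> B" by blast
    have yV: "y \<in> V" "y \<notin> B" using y(1) unfolding white_comp_def by auto
    have "Y \<noteq> Z" using aYZ adj_irrefl by metis
    then have ne: "y \<noteq> z" using y z by auto
    have "adj E y z" using key[OF yV(1) z(1) ne] aYZ y(2) z(2) by simp
    moreover have "(\<lambda>a b. adj E a b \<and> a \<in> V - B \<and> b \<in> V - B)\<^sup>*\<^sup>* w y"
      using y(1) unfolding white_comp_def by auto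
    ultimately have "(\<lambda>a b. adj E a b \<and> a \<in> V - B \<and> b \<in> V - B)\<^sup>*\<^sup>* w z"
      using yV z by (auto intro: rtranclp.rtrancl_into_rtrancl)
    then have "z \<in> white_comp V E B w" using z unfolding white_comp_def by auto
    then show ?case using z by blast
  qed
qed

lemma force_B:
  assumes nbr: "\<forall>I\<in>W. \<exists>J. adj EH I J" and B: "B \<subseteq> V" and cf: "can_force V E B u w"
  shows "\<exists>u'. can_force W EH (Bh B) u' (f w) \<and> Bh (insert w B) = insert (f w) (Bh B)"
proof -
  from cf have uB: "u \<in> B" and w: "w \<in> V - B"
    and S: "{x \<in> white_comp V E B w. adj E u x} = {w}" unfolding can_force_def by auto
  have uV: "u \<in> V" using uB B by auto
  have wV: "w \<in> V" "w \<notin> B" using w by auto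
  have uw: "u \<noteq> w" using uB wV by auto
  have wc: "w \<in> white_comp V E B w" using w unfolding white_comp_def by auto
  have auw: "adj E u w" using S by auto
  have fw: "f w \<in> W" using fV[OF wV(1)] .
  have nbw: "y \<in> white_comp V E B w" if y: "y \<in> V" "y \<notin> B" "adj E w y" for y
  proof -
    have "(\<lambda>a b. adj E a b \<and> a \<in> V - B \<and> b \<in> V - B)\<^sup>*\<^sup>* w y" using wV y by (auto intro: r_into_rtranclp)
    then show "y \<in> white_comp V E B w" using y unfolding white_comp_def by auto
  qed
  have T: "w' = w" if w': "w' \<in> V" "w' \<notin> B" "f w' = f w" for w'
  proof (rule ccontr)
    assume ne: "w' \<noteq> w"
    have "adj E w w'" using key[OF wV(1) w'(1)] w'(3) ne by auto
    then have c: "w' \<in> white_comp V E B w" using nbw w' by auto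
    have uw': "u \<noteq> w'" using uB w' by auto
    have "adj E u w' \<longleftrightarrow> (f u = f w' \<or> adj EH (f u) (f w'))" by (rule key[OF uV w'(1) uw'])
    moreover have "f u = f w \<or> adj EH (f u) (f w)" using key[OF uV wV(1) uw] auw by simp
    ultimately have "adj E u w'" using w'(3) by simp
    then have "w' \<in> {x \<in> white_comp V E B w. adj E u x}" using c by auto
    then show False using S ne by auto
  qed
  have Bh_ins: "Bh (insert w B) = insert (f w) (Bh B)"
  proof
    show "Bh (insert w B) \<subseteq> insert (f w) (Bh B)" unfolding Bh_def by auto
    show "insert (f w) (Bh B) \<subseteq> Bh (insert w B)" unfolding Bh_def using T fw by auto
  qed
  have fwnot: "f w \<notin> Bh B" using wV unfolding Bh_def by auto
  have BhW: "Bh B \<subseteq> W" unfolding Bh_def by auto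
  have fwc: "f w \<in> white_comp W EH (Bh B) (f w)" using fw fwnot unfolding white_comp_def by auto
  show ?thesis
  proof (cases "f u = f w")
    case False
    have afuw: "adj EH (f u) (f w)" using key[OF uV wV(1) uw] auw False by simp
    have fuB: "f u \<in> Bh B"
    proof -
      have "v \<in> B" if v: "v \<in> V" "f v = f u" for v
      proof (rule ccontr)
        assume vB: "v \<notin> B"
        have vw: "v \<noteq> w" using v False by auto
        have "adj EH (f w) (f v)" using afuw v(2) adj_sym by metis
        then have "adj E w v" using key[OF wV(1) v(1)] vw by auto
        then have c: "v \<in> white_comp V E B w" using nbw v vB by auto
        have uv: "u \<noteq> v" using uB vB by auto
        have "adj E u v" using key[OF uV v(1) uv] v(2) by simp
        then show False using S c vw by auto
      qed
      then show ?thesis unfolding Bh_def using fV[OF uV] by auto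
    qed
    have S2: "{X \<in> white_comp W EH (Bh B) (f w). adj EH (f u) X} = {f w}"
    proof
      show "{X \<in> white_comp W EH (Bh B) (f w). adj EH (f u) X} \<subseteq> {f w}"
      proof
        fix X assume X: "X \<in> {X \<in> white_comp W EH (Bh B) (f w). adj EH (f u) X}"
        then obtain x where x: "x \<in> white_comp V E B w" "f x = X" using comp_lift_B[OF B w] by blast
        have xV: "x \<in> V" using x(1) unfolding white_comp_def by auto
        have aX: "adj EH (f u) X" using X by auto
        then have "f u \<noteq> X" using adj_irrefl by metis
        then have ux: "u \<noteq> x" using x by auto
        have "adj E u x" using key[OF uV xV ux] aX x(2) by auto
        then have "x = w" using S x(1) by auto
        then show "X \<in> {f w}" using x by auto
      qed
      show "{f w} \<subseteq> {X \<in> white_comp W EH (Bh B) (f w). adj EH (f u) X}" using fwc afuw by auto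
    qed
    have "can_force W EH (Bh B) (f u) (f w)" unfolding can_force_def using fuB BhW fw fwnot S2 by blast
    then show ?thesis using Bh_ins by blast
  next
    case True
    have nowhite: "\<not> adj E w y" if y: "y \<in> V" "y \<notin> B" for y
    proof
      assume ay: "adj E w y"
      have c: "y \<in> white_comp V E B w" using nbw y ay by auto
      have yw: "w \<noteq> y" using ay adj_irrefl by metis
      have uy: "u \<noteq> y" using uB y by auto
      have "f w = f y \<or> adj EH (f w) (f y)" using key[OF wV(1) y(1) yw] ay by simp
      then have "adj E u y" using key[OF uV y(1) uy] True by simp
      then show False using S c yw by auto
    qed
    have compw: "white_comp V E B w = {w}"
    proof
      show "white_comp V E B w \<subseteq> {w}"
      proof
        fix x assume "x \<in> white_comp V E B w"
        then have "(\<lambda>a b. adj E a b \<and> a \<in> V - B \<and> b \<in> V - B)\<^sup>*\<^sup>* w x" unfolding white_comp_def by auto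
        then show "x \<in> {w}"
        proof (cases rule: converse_rtranclpE)
          case base then show ?thesis by simp
        next
          case (step y) then show ?thesis using nowhite by auto
        qed
      qed
      show "{w} \<subseteq> white_comp V E B w" using wc by auto
    qed
    obtain J where aJ: "adj EH (f w) J" using nbr fw by blast
    have JW: "J \<in> W" using adjW[OF aJ] by auto
    have JB: "J \<in> Bh B"
    proof -
      have "v \<in> B" if v: "v \<in> V" "f v = J" for v
      proof (rule ccontr)
        assume vB: "v \<notin> B"
        have "f w \<noteq> J" using aJ adj_irrefl by metis
        then have "w \<noteq> v" using v by auto
        then have "adj E w v" using key[OF wV(1) v(1)] aJ v(2) by simp
        then show False using nowhite v vB by auto
      qed
      then show ?thesis unfolding Bh_def using JW by auto
    qed
    have aJ2: "adj EH J (f w)" using aJ adj_sym by metis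
    have S2: "{X \<in> white_comp W EH (Bh B) (f w). adj EH J X} = {f w}"
    proof
      show "{X \<in> white_comp W EH (Bh B) (f w). adj EH J X} \<subseteq> {f w}"
      proof
        fix X assume X: "X \<in> {X \<in> white_comp W EH (Bh B) (f w). adj EH J X}"
        then obtain x where x: "x \<in> white_comp V E B w" "f x = X" using comp_lift_B[OF B w] by blast
        then show "X \<in> {f w}" using compw by auto
      qed
      show "{f w} \<subseteq> {X \<in> white_comp W EH (Bh B) (f w). adj EH J X}" using fwc aJ2 by auto
    qed
    have "can_force W EH (Bh B) J (f w)" unfolding can_force_def using JB BhW fw fwnot S2 by blast
    then show ?thesis using Bh_ins by blast
  qed
qed

lemma seq_B:
  assumes nbr: "\<forall>I\<in>W. \<exists>J. adj EH I J"
  shows "B \<subseteq> V \<Longrightarrow> force_seq V E B fs \<Longrightarrow> \<exists>fs'. force_seq W EH (Bh B) fs' \<and> length fs' = length fs \<and>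
           Bh B \<union> snd ` set fs' = Bh (B \<union> snd ` set fs)"
proof (induction fs arbitrary: B)
  case Nil
  show ?case by (rule exI[of _ "[]"]) simp
next
  case (Cons p fs)
  obtain u w where p: "p = (u, w)" by (cases p)
  from Cons.prems p have cf: "can_force V E B u w" and fsq: "force_seq V E (insert w B) fs" by auto
  obtain u' where cf': "can_force W EH (Bh B) u' (f w)" and bi: "Bh (insert w B) = insert (f w) (Bh B)"
    using force_B[OF nbr Cons.prems(1) cf] by blast
  have "w \<in> V" using cf unfolding can_force_def by auto
  then have sub: "insert w B \<subseteq> V" using Cons.prems(1) by blast
  obtain fs'' where f1: "force_seq W EH (Bh (insert w B)) fs''" and f2: "length fs'' = length fs"
    and f3: "Bh (insert w B) \<union> snd ` set fs'' = Bh (insert w B \<union> snd ` set fs)"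
    using Cons.IH[OF sub fsq] by blast
  have "force_seq W EH (Bh B) ((u', f w) # fs'')" using cf' f1 bi by simp
  moreover have "length ((u', f w) # fs'') = length (p # fs)" using f2 by simp
  moreover have "Bh B \<union> snd ` set ((u', f w) # fs'') = Bh (B \<union> snd ` set (p # fs))"
  proof -
    have "Bh B \<union> snd ` set ((u', f w) # fs'') = Bh (insert w B) \<union> snd ` set fs''" using bi by auto
    also have "\<dots> = Bh (insert w B \<union> snd ` set fs)" using f3 .
    also have "insert w B \<union> snd ` set fs = B \<union> snd ` set (p # fs)" using p by auto
    finally show ?thesis .
  qed
  ultimately show ?case by blast
qed

lemma main_B:
  assumes nbr: "\<forall>I\<in>W. \<exists>J. adj EH I J" and P: "pzf_process V E B fs"
  shows "\<exists>B'. pzf_set W EH B' \<and> card B' + card V = card W + card B"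
proof -
  from P have B: "B \<subseteq> V" and fsq: "force_seq V E B fs" and cov: "B \<union> snd ` set fs = V"
    unfolding pzf_process_def by auto
  obtain fs' where f1: "force_seq W EH (Bh B) fs'" and f2: "length fs' = length fs"
    and f3: "Bh B \<union> snd ` set fs' = Bh (B \<union> snd ` set fs)"
    using seq_B[OF nbr B fsq] by blast
  have BhV: "Bh V = W" unfolding Bh_def by auto
  have BhW: "Bh B \<subseteq> W" unfolding Bh_def by auto
  have cov2: "Bh B \<union> snd ` set fs' = W" using f3 cov BhV by simp
  have p: "pzf_process W EH (Bh B) fs'" unfolding pzf_process_def using BhW f1 cov2 by blast
  have finB: "finite B" using B finV finite_subset by auto
  have finBh: "finite (Bh B)" using BhW finW finite_subset by auto
  have c1: "card V = card B + length fs" using force_seq_card[OF fsq finB] cov by simp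
  have c2: "card W = card (Bh B) + length fs'" using force_seq_card[OF f1 finBh] cov2 by simp
  have "card (Bh B) + card V = card W + card B" using c1 c2 f2 by simp
  then show ?thesis using p unfolding pzf_set_def by blast
qed

end


lemma three_elems:
  assumes "finite A" "2 < card A"
  shows "\<exists>a b c. a \<in> A \<and> b \<in> A \<and> c \<in> A \<and> a \<noteq> b \<and> a \<noteq> c \<and> b \<noteq> c"
proof -
  have "A \<noteq> {}" using assms(2) by (metis card.empty not_less_zero)
  then obtain a where a: "a \<in> A" by blast
  have c1: "card (A - {a}) = card A - 1" using a assms(1) by (simp add: card_Diff_singleton)
  then have "A - {a} \<noteq> {}" using assms(2) by (metis card.empty diff_is_0_eq less_le_not_le one_le_numeral order.trans)
  then obtain b where b: "b \<in> A - {a}" by blast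
  have c2: "card (A - {a} - {b}) = card (A - {a}) - 1" using b assms(1) by (simp add: card_Diff_singleton)
  have "card (A - {a} - {b}) \<noteq> 0" using c1 c2 assms(2) by linarith
  then have "A - {a} - {b} \<noteq> {}" by (metis card.empty)
  then obtain c where c: "c \<in> A - {a} - {b}" by blast
  show ?thesis using a b c by blast
qed

theorem mainTheorem5:
  fixes V :: "'a set" and E :: "'a set set" and \<C> :: "'a set set"
  assumes "sgraph V E"
    and "connected_graph V E"
    and "\<not> is_clique V E V"
    and "minmax_clique_cover V E \<C>"
    and "simple_intersection \<C>"
  shows "int (card V) - int (Zplus V E)
           = int (card (ccg_V \<C>)) - int (Zplus (ccg_V \<C>) (ccg_E \<C>)) \<and>
         (\<exists>B fs B' fs' \<phi>.
           pzf_process V E B fs \<and> card B = Zplus V E \<and>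
           pzf_process (ccg_V \<C>) (ccg_E \<C>) B' fs' \<and> card B' = Zplus (ccg_V \<C>) (ccg_E \<C>) \<and>
           inj_on \<phi> (ccg_V \<C>) \<and> (\<forall>I\<in>ccg_V \<C>. \<phi> I \<in> cpart \<C> I) \<and>
           set fs = (\<lambda>(u, w). (\<phi> u, \<phi> w)) ` set fs' \<and>
           B = \<phi> ` B' \<union> (V - \<phi> ` ccg_V \<C>))"
proof -
  note sg = assms(1) and conn = assms(2) and ncl = assms(3) and mm = assms(4) and si = assms(5)
  define W where "W = ccg_V \<C>"
  define EH where "EH = ccg_E \<C>"
  define cl where "cl v = {C \<in> \<C>. v \<in> C}" for v
  from mm have finC: "finite \<C>" and clq: "\<And>C. C \<in> \<C> \<Longrightarrow> is_clique V E C"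
    and cov: "\<And>e. e \<in> E \<Longrightarrow> \<exists>C\<in>\<C>. e \<subseteq> C"
    unfolding minmax_clique_cover_def clique_cover_def by auto
  have finV: "finite V" using sg unfolding sgraph_def by auto
  have CV: "\<And>C. C \<in> \<C> \<Longrightarrow> C \<subseteq> V" using clq unfolding is_clique_def by auto
  have F1: "u \<in> V \<and> v \<in> V" if "adj E u v" for u v
  proof -
    have "{u, v} \<in> E" using that unfolding adj_def by auto
    then obtain a b where ab: "a \<in> V" "b \<in> V" "{u, v} = {a, b}" using sg unfolding sgraph_def by blast
    have "u \<in> {a, b}" "v \<in> {a, b}" using ab(3) by blast+
    then show ?thesis using ab by blast
  qed
  have finW: "finite W"
  proof -
    have "W \<subseteq> Pow \<C>" unfolding W_def ccg_V_def by auto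
    then show ?thesis using finC finite_subset by blast
  qed
  have F3: "adj EH I J \<longleftrightarrow> I \<in> W \<and> J \<in> W \<and> I \<noteq> J \<and> I \<inter> J \<noteq> {}" for I J
  proof
    assume "adj EH I J"
    then have ne: "I \<noteq> J" and "{I, J} \<in> ccg_E \<C>" unfolding adj_def EH_def by auto
    then obtain I' J' where h: "{I, J} = {I', J'}" "I' \<in> W" "J' \<in> W" "I' \<inter> J' \<noteq> {}"
      unfolding ccg_E_def W_def by blast
    from h(1) have "(I = I' \<and> J = J') \<or> (I = J' \<and> J = I')" by (simp add: doubleton_eq_iff)
    then show "I \<in> W \<and> J \<in> W \<and> I \<noteq> J \<and> I \<inter> J \<noteq> {}" using h ne by auto
  next
    assume h: "I \<in> W \<and> J \<in> W \<and> I \<noteq> J \<and> I \<inter> J \<noteq> {}"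
    then have "{I, J} \<in> ccg_E \<C>" unfolding ccg_E_def W_def by blast
    then show "adj EH I J" using h unfolding adj_def EH_def by auto
  qed
  have F4: "{u, v} \<in> E \<longleftrightarrow> cl u \<inter> cl v \<noteq> {}" if uv: "u \<in> V" "v \<in> V" "u \<noteq> v" for u v
  proof
    assume "{u, v} \<in> E"
    then obtain C where "C \<in> \<C>" "{u, v} \<subseteq> C" using cov by blast
    then show "cl u \<inter> cl v \<noteq> {}" unfolding cl_def by auto
  next
    assume "cl u \<inter> cl v \<noteq> {}"
    then obtain C where C: "C \<in> \<C>" "u \<in> C" "v \<in> C" unfolding cl_def by auto
    then show "{u, v} \<in> E" using clq[OF C(1)] uv unfolding is_clique_def by auto
  qed
  obtain a b where ab: "a \<in> V" "b \<in> V" "a \<noteq> b" "{a, b} \<notin> E"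
    using ncl unfolding is_clique_def by auto
  have clne: "cl v \<noteq> {}" if v: "v \<in> V" for v
  proof -
    define x where "x = (if v = a then b else a)"
    have x: "x \<in> V" "x \<noteq> v" unfolding x_def using ab by auto
    have "(adj E)\<^sup>*\<^sup>* v x" using conn v x unfolding connected_graph_def by auto
    then obtain y where "adj E v y"
      by (cases rule: converse_rtranclpE) (use x in auto)
    then have "{v, y} \<in> E" unfolding adj_def by auto
    then obtain C where "C \<in> \<C>" "{v, y} \<subseteq> C" using cov by blast
    then show ?thesis unfolding cl_def by auto
  qed
  have clsub: "cl v \<subseteq> \<C>" for v unfolding cl_def by auto
  have SI: "C1 \<inter> C2 \<inter> C3 = {}" if "C1 \<in> \<C>" "C2 \<in> \<C>" "C3 \<in> \<C>" "C1 \<noteq> C2" "C1 \<noteq> C3" "C2 \<noteq> C3" for C1 C2 C3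
  proof -
    have "\<forall>C1\<in>\<C>. \<forall>C2\<in>\<C>. \<forall>C3\<in>\<C>. C1 \<noteq> C2 \<and> C1 \<noteq> C3 \<and> C2 \<noteq> C3 \<longrightarrow> C1 \<inter> C2 \<inter> C3 = {}"
      using si unfolding simple_intersection_def .
    then show ?thesis using that by blast
  qed
  have clfin: "finite (cl v)" for v using clsub finC finite_subset by blast
  have F6: "card (cl v) = 1 \<or> card (cl v) = 2" if v: "v \<in> V" for v
  proof -
    have "card (cl v) \<noteq> 0" using clne[OF v] clfin[of v] by simp
    moreover have "\<not> 2 < card (cl v)"
    proof
      assume "2 < card (cl v)"
      from three_elems[OF clfin[of v] this] obtain C1 C2 C3 where
        c: "C1 \<in> cl v" "C2 \<in> cl v" "C3 \<in> cl v" "C1 \<noteq> C2" "C1 \<noteq> C3" "C2 \<noteq> C3"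
        by blast
      have "C1 \<in> \<C>" "C2 \<in> \<C>" "C3 \<in> \<C>" using c(1-3) clsub[of v] by blast+
      then have "C1 \<inter> C2 \<inter> C3 = {}" using SI c(4-6) by blast
      moreover have "v \<in> C1 \<inter> C2 \<inter> C3" using c unfolding cl_def by auto
      ultimately show False by auto
    qed
    ultimately show ?thesis by linarith
  qed
  have F7: "cl v \<in> W \<and> v \<in> cpart \<C> (cl v)" if v: "v \<in> V" for v
  proof -
    have vin: "v \<in> cpart \<C> (cl v)"
    proof (cases "card (cl v) = 1")
      case True
      then obtain C where C: "cl v = {C}" using card_1_singletonE by blast
      then show ?thesis unfolding cpart_def using True by (auto simp: cl_def)
    next
      case False
      then show ?thesis unfolding cpart_def by (auto simp: cl_def)
    qed
    then show ?thesis unfolding W_def ccg_V_def using F6[OF v] clsub by blast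
  qed
  have F8: "v \<in> V \<and> cl v = I" if I: "I \<in> W" and v: "v \<in> cpart \<C> I" for I v
  proof -
    from I have IC: "I \<subseteq> \<C>" and cI: "card I = 1 \<or> card I = 2" unfolding W_def ccg_V_def by auto
    show ?thesis
    proof (cases "card I = 1")
      case True
      then obtain C where C: "I = {C}" using card_1_singletonE by blast
      have CC: "C \<in> \<C>" using C IC by auto
      have "cpart \<C> I = C - \<Union>(\<C> - {C})" unfolding cpart_def using True C by simp
      then have vC: "v \<in> C" "v \<notin> \<Union>(\<C> - {C})" using v by auto
      have "cl v = {C}"
      proof
        show "cl v \<subseteq> {C}" unfolding cl_def using vC(2) by blast
        show "{C} \<subseteq> cl v" unfolding cl_def using vC(1) CC by blast
      qed
      moreover have "v \<in> V" using vC(1) CV[OF CC] by blast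
      ultimately show ?thesis using C by simp
    next
      case False
      then have "card I = 2" using cI by auto
      then obtain C D where CD: "I = {C, D}" "C \<noteq> D" by (meson card_2_iff)
      have CC: "C \<in> \<C>" "D \<in> \<C>" using CD IC by auto
      have "cpart \<C> I = \<Inter> I" unfolding cpart_def using False by simp
      then have vCD: "v \<in> C" "v \<in> D" using v CD by auto
      have "cl v = {C, D}"
      proof
        show "{C, D} \<subseteq> cl v" using vCD CC unfolding cl_def by auto
        show "cl v \<subseteq> {C, D}"
        proof
          fix X assume X: "X \<in> cl v"
          show "X \<in> {C, D}"
          proof (rule ccontr)
            assume nX: "X \<notin> {C, D}"
            have XC: "X \<in> \<C>" using X clsub[of v] by blast
            have "C \<noteq> X" "D \<noteq> X" using nX by auto
            then have e: "C \<inter> D \<inter> X = {}" using SI[of C D X] CC XC CD(2) by blast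
            have "v \<in> X" using X unfolding cl_def by simp
            then have "v \<in> C \<inter> D \<inter> X" using vCD by blast
            then show False using e by blast
          qed
        qed
      qed
      moreover have "v \<in> V" using vCD(1) CV[OF CC(1)] by blast
      ultimately show ?thesis using CD by simp
    qed
  qed
  have F9: "adj E u v \<longleftrightarrow> (cl u = cl v \<or> adj EH (cl u) (cl v))"
    if uv: "u \<in> V" "v \<in> V" "u \<noteq> v" for u v
  proof -
    have "adj E u v \<longleftrightarrow> {u, v} \<in> E" unfolding adj_def using uv by auto
    also have "\<dots> \<longleftrightarrow> cl u \<inter> cl v \<noteq> {}" using F4[OF uv] .
    also have "\<dots> \<longleftrightarrow> (cl u = cl v \<or> adj EH (cl u) (cl v))"
      using F3[of "cl u" "cl v"] F7[OF uv(1)] F7[OF uv(2)] clne[OF uv(1)] by auto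
    finally show ?thesis .
  qed
  interpret T: tq V E W EH cl
  proof
    show "finite V" by (rule finV)
    show "finite W" by (rule finW)
    show "\<And>u v. adj E u v \<Longrightarrow> u \<in> V \<and> v \<in> V" by (rule F1)
    show "\<And>I J. adj EH I J \<Longrightarrow> I \<in> W \<and> J \<in> W" using F3 by blast
    show "\<And>v. v \<in> V \<Longrightarrow> cl v \<in> W" using F7 by blast
    show "\<And>u v. u \<in> V \<Longrightarrow> v \<in> V \<Longrightarrow> u \<noteq> v \<Longrightarrow> adj E u v \<longleftrightarrow> (cl u = cl v \<or> adj EH (cl u) (cl v))"
      by (rule F9)
  qed
  have nbr: "\<forall>I\<in>W. \<exists>J. adj EH I J"
  proof
    fix I assume I: "I \<in> W"
    then have "cpart \<C> I \<noteq> {}" unfolding W_def ccg_V_def by auto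
    then obtain w where w: "w \<in> cpart \<C> I" by auto
    have wV: "w \<in> V" and clw: "cl w = I" using F8[OF I w] by auto
    have "\<exists>x\<in>V. cl x \<noteq> I"
    proof (rule ccontr)
      assume "\<not> (\<exists>x\<in>V. cl x \<noteq> I)"
      then have "cl a = I" "cl b = I" using ab by auto
      then have "cl a \<inter> cl b \<noteq> {}" using clne[OF ab(1)] by auto
      then show False using F4[OF ab(1) ab(2) ab(3)] ab(4) by auto
    qed
    then obtain x where x: "x \<in> V" "cl x \<noteq> I" by blast
    have path: "(adj E)\<^sup>*\<^sup>* w x" using conn wV x unfolding connected_graph_def by auto
    have "\<exists>y z. adj E y z \<and> cl y = I \<and> cl z \<noteq> I" using path x(2)
    proof (induction rule: rtranclp_induct)
      case base
      then show ?case using clw by auto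
    next
      case (step y z)
      show ?case
      proof (cases "cl y = I")
        case True
        then show ?thesis using step by blast
      next
        case False
        then show ?thesis using step.IH by blast
      qed
    qed
    then obtain y z where yz: "adj E y z" "cl y = I" "cl z \<noteq> I" by blast
    have "y \<in> V" "z \<in> V" using F1[OF yz(1)] by auto
    moreover have "y \<noteq> z" using yz(1) adj_irrefl by metis
    ultimately have "adj EH (cl y) (cl z)" using F9 yz by blast
    then show "\<exists>J. adj EH I J" using yz(2) by blast
  qed
  define \<phi> where "\<phi> I = (SOME v. v \<in> cpart \<C> I)" for I
  have phi_in: "\<phi> I \<in> cpart \<C> I" if I: "I \<in> W" for I
  proof -
    have "cpart \<C> I \<noteq> {}" using I unfolding W_def ccg_V_def by auto
    then show ?thesis unfolding \<phi>_def by (meson ex_in_conv someI_ex)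
  qed
  have phiV: "\<phi> I \<in> V" if "I \<in> W" for I using F8[OF that phi_in[OF that]] by auto
  have fphi: "cl (\<phi> I) = I" if "I \<in> W" for I using F8[OF that phi_in[OF that]] by auto
  obtain B' where B': "pzf_set W EH B'" "card B' = Zplus W EH" using Zplus_props[OF finW] by blast
  obtain fs' where fs': "pzf_process W EH B' fs'" using B'(1) unfolding pzf_set_def by blast
  have A: "pzf_process V E (T.Bg \<phi> B') (map (\<lambda>(u, w). (\<phi> u, \<phi> w)) fs') \<and>
           card (T.Bg \<phi> B') + card W = card V + card B'"
    by (rule T.main_A[OF phiV fphi fs'])
  define B where "B = \<phi> ` B' \<union> (V - \<phi> ` W)"
  define fs where "fs = map (\<lambda>(u, w). (\<phi> u, \<phi> w)) fs'"
  have BgB: "T.Bg \<phi> B' = B" unfolding B_def using T.Bg_def[OF phiV fphi] by simp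
  have pB: "pzf_process V E B fs" and cB: "card B + card W = card V + card B'"
    using A BgB unfolding fs_def by auto
  have le1: "Zplus V E \<le> card B" using Zplus_props[OF finV] pB unfolding pzf_set_def by blast
  obtain B0 where B0: "pzf_set V E B0" "card B0 = Zplus V E" using Zplus_props[OF finV] by blast
  obtain fs0 where fs0: "pzf_process V E B0 fs0" using B0(1) unfolding pzf_set_def by blast
  obtain B'' where B'': "pzf_set W EH B''" "card B'' + card V = card W + card B0"
    using T.main_B[OF nbr fs0] by blast
  have le2: "Zplus W EH \<le> card B''" using Zplus_props[OF finW] B''(1) by blast
  have eq: "Zplus V E + card W = card V + Zplus W EH" using le1 le2 cB B'' B0(2) B'(2) by linarith
  have cBZ: "card B = Zplus V E" using le1 le2 cB B'' B0(2) B'(2) by linarith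
  have inj: "inj_on \<phi> W"
  proof (rule inj_onI)
    fix I J assume "I \<in> W" "J \<in> W" "\<phi> I = \<phi> J"
    then show "I = J" using fphi by metis
  qed
  have part1: "int (card V) - int (Zplus V E) = int (card W) - int (Zplus W EH)"
    using eq by linarith
  have part2: "\<exists>B fs B' fs' \<phi>.
           pzf_process V E B fs \<and> card B = Zplus V E \<and>
           pzf_process W EH B' fs' \<and> card B' = Zplus W EH \<and>
           inj_on \<phi> W \<and> (\<forall>I\<in>W. \<phi> I \<in> cpart \<C> I) \<and>
           set fs = (\<lambda>(u, w). (\<phi> u, \<phi> w)) ` set fs' \<and>
           B = \<phi> ` B' \<union> (V - \<phi> ` W)"
    apply (rule exI[of _ B], rule exI[of _ fs], rule exI[of _ B'], rule exI[of _ fs'], rule exI[of _ \<phi>])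
    using pB cBZ fs' B'(2) inj phi_in unfolding fs_def B_def by auto
  show ?thesis using part1 part2 unfolding W_def EH_def by blast
qed

end
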